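(* Let $P = \{\boldsymbol{p}_1, \dots, \boldsymbol{p}_N\} \subset [0,1)^d$ be a $(t,m,d)$-net in base $b$. Let $\boldsymbol{\sigma}=(\sigma_1,\ldots,\sigma_d)$ be a $d$-tuple of mutually independent random $b$-ary scramblings of depth $\ell = m-t$, each of the form $$\sigma(x) = \sum_{j=1}^{\ell} \pi_{\xi_1,\ldots,\xi_{j-1}}(\xi_j) b^{-j} + y_x b^{-\ell},$$ where for each $j\in [1..d]$ all random permutations employed by $\sigma_j$ have single-fold uniformity and all families of random permutations that scramble different digits are mutually independent. Then $(\boldsymbol{\sigma}(\boldsymbol{p}_i))_{i=1}^N$, with $\boldsymbol{\sigma}(\boldsymbol{p}) := (\sigma_1(p_1), \ldots, \sigma_d(p_d))$, is an abstract scrambled $(t,m,d)$-net in base $b$. The statement holds, in particular, if each $\sigma_j$, $j=1,\ldots,d$, is a nested or positional (i) uniform or (ii) linear or (iii) digit shift $b$-ary random scrambling of depth $m-t$, or an affine matrix $b$-ary random scrambling of depth $m-t$.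
   Context: Fix integers $d,b\ge 2$, $m\ge t\ge 0$, $N=b^m$. An elementary interval in base $b$ of order $m-t$ is a set $\prod_{i=1}^d [k_i b^{-\ell_i},(k_i+1)b^{-\ell_i})\subseteq[0,1)^d$ with nonnegative integers $\ell_i$, $k_i<b^{\ell_i}$, of volume $b^{-(m-t)}$. An $N$-point multiset in $[0,1)^d$ is a $(t,m,d)$-net in base $b$ if every elementary interval in base $b$ of order $m-t$ contains exactly $b^t$ of its points. A basic cube is a set $\prod_{j=1}^d [k_j b^{-(m-t)},(k_j+1)b^{-(m-t)})$ with $k_j\in[0..b^{m-t}-1]$. A tuple ${\bf Y}=(Y_i)_{i=1}^N$ of random points in $[0,1)^d$ is an abstract scrambled $(t,m,d)$-net in base $b$ if (i) with probability one it is a $(t,m,d)$-net in base $b$; (ii) for each $i$ and each basic cube $C$, ${\mathbb{P}}(Y_i\in C)=b^{-d(m-t)}$; (iii) for all measurable $M\subseteq[0,1)^d$, all $\emptyset\ne J\subseteq[1..N]$ and all families of basic cubes $(C_j)_{j\in J}$ with ${\mathbb{P}}(\forall j\in J: Y_j\in C_j)>0$, ${\mathbb{P}}(\forall j\in J: Y_j\in M \mid \forall j\in J: Y_j\in C_j)=\prod_{j\in J}\lambda^d(M\cap C_j)/\lambda^d(C_j)$. In the scrambling formula, $x=\sum_{j\ge1}\xi_j b^{-j}$ is the $b$-ary expansion of $x\in[0,1)$ (with infinitely many digits $\xi_j\ne b-1$), each $\pi_{\xi_1,\ldots,\xi_{j-1}}$ is a random permutation of $\{0,1,\ldots,b-1\}$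 (which may depend on the first $j-1$ digits of $x$), and when mapping a finite multiset $(x^{(n)})_{n=1}^N$ the values $y_{x^{(n)}}\in[0,1)$ are chosen uniformly at random and independently for distinct $n$ (even if $x^{(i)}=x^{(j)}$). A random permutation $\pi$ of $\{0,\ldots,b-1\}$ has single-fold uniformity if ${\mathbb{P}}(\pi(i)=j)=1/b$ for all $i,j$. Nested scrambling: the permutation for digit $j$ depends on all previous digits $\xi_1,\ldots,\xi_{j-1}$, all permutations chosen independently; positional scrambling: one permutation $\pi_j$ per digit position $j$, independent of previous digits. "Uniform", "linear", "digit shift" mean the permutations are drawn uniformly from all permutations, all linear permutations, or all digital shifts of $\{0,\ldots,b-1\}$, respectively. Affine matrix scrambling of depth $\ell$: for $k=1,\ldots,\ell$ the $k$th digit of $\sigma(x)$ is $h_{k,k}\xi_k+\sum_{j<k}h_{k,j}\xi_j+g_k$ (mod $b$), with $h_{k,k}\in\{1,\ldots,b-1\}$, $h_{k,j},g_k\in\{0,\ldots,b-1\}$ uniform and mutually independent. *)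

theory Defs
  imports "HOL-Probability.Probability"
begin

text \<open>The j-th b-ary digit (j >= 1) of x in [0,1), taken from the expansion with
  infinitely many digits different from b-1 (i.e. the greedy expansion).\<close>
definition digit :: "nat \<Rightarrow> real \<Rightarrow> nat \<Rightarrow> nat" where
  "digit b x j = nat (\<lfloor>x * real b ^ j\<rfloor> mod int b)"

definition digit_prefix :: "nat \<Rightarrow> real \<Rightarrow> nat \<Rightarrow> nat list" where
  "digit_prefix b x j = map (digit b x) [1..<Suc j]"

definition scramble :: "nat \<Rightarrow> nat \<Rightarrow> (nat list \<Rightarrow> nat \<Rightarrow> nat) \<Rightarrow> real \<Rightarrow> real \<Rightarrow> real" where
  "scramble b l \<pi> y x =
     (\<Sum>j=1..l. real (\<pi> (digit_prefix b x (j - 1)) (digit b x j)) / real b ^ j) + y / real b ^ l"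

definition unit_cube :: "(real ^ 'd) set" where
  "unit_cube = {x. \<forall>i. 0 \<le> x $ i \<and> x $ i < 1}"

definition elem_box :: "nat \<Rightarrow> ('d \<Rightarrow> nat) \<Rightarrow> ('d \<Rightarrow> nat) \<Rightarrow> (real ^ 'd) set" where
  "elem_box b l k = {x. \<forall>i. real (k i) / real b ^ l i \<le> x $ i \<and> x $ i < (real (k i) + 1) / real b ^ l i}"

definition elementary_interval :: "nat \<Rightarrow> nat \<Rightarrow> (real ^ 'd) set \<Rightarrow> bool" where
  "elementary_interval b r E \<longleftrightarrow>
     (\<exists>l k. (\<forall>i. k i < b ^ l i) \<and> (\<Sum>i\<in>UNIV. l i) = r \<and> E = elem_box b l k)"

definition is_net :: "nat \<Rightarrow> nat \<Rightarrow> nat \<Rightarrow> (nat \<Rightarrow> real ^ 'd) \<Rightarrow> bool" where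
  "is_net b t m P \<longleftrightarrow>
     (\<forall>i<b ^ m. P i \<in> unit_cube) \<and>
     (\<forall>E. elementary_interval b (m - t) E \<longrightarrow> card {i\<in>{..<b ^ m}. P i \<in> E} = b ^ t)"

definition basic_cube :: "nat \<Rightarrow> nat \<Rightarrow> nat \<Rightarrow> (real ^ 'd) set \<Rightarrow> bool" where
  "basic_cube b t m C \<longleftrightarrow> (\<exists>k. (\<forall>i. k i < b ^ (m - t)) \<and> C = elem_box b (\<lambda>_. m - t) k)"

definition abstract_scrambled_net ::
    "'a measure \<Rightarrow> nat \<Rightarrow> nat \<Rightarrow> nat \<Rightarrow> (nat \<Rightarrow> 'a \<Rightarrow> real ^ 'd) \<Rightarrow> bool" where
  "abstract_scrambled_net M b t m Y \<longleftrightarrow>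
     (\<forall>i<b ^ m. Y i \<in> borel_measurable M \<and> (\<forall>\<omega>\<in>space M. Y i \<omega> \<in> unit_cube)) \<and>
     (AE \<omega> in M. is_net b t m (\<lambda>i. Y i \<omega>)) \<and>
     (\<forall>i<b ^ m. \<forall>C. basic_cube b t m C \<longrightarrow>
        measure M {\<omega>\<in>space M. Y i \<omega> \<in> C} = 1 / real b ^ (CARD('d) * (m - t))) \<and>
     (\<forall>A\<in>sets lborel. \<forall>J C. J \<noteq> {} \<longrightarrow> J \<subseteq> {..<b ^ m} \<longrightarrow>
        (\<forall>j\<in>J. basic_cube b t m (C j)) \<longrightarrow>
        measure M {\<omega>\<in>space M. \<forall>j\<in>J. Y j \<omega> \<in> C j} > 0 \<longrightarrow>
        measure M {\<omega>\<in>space M. \<forall>j\<in>J. Y j \<omega> \<in> A \<inter> C j}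
          / measure M {\<omega>\<in>space M. \<forall>j\<in>J. Y j \<omega> \<in> C j}
        = (\<Prod>j\<in>J. measure lborel (A \<inter> C j) / measure lborel (C j)))"

text \<open>The family of permutations used for digit j+1 (i.e. indexed by prefixes of length j),
  restricted to the relevant finite domain (digit prefixes over {0..b-1}, arguments < b).\<close>
definition perm_family :: "nat \<Rightarrow> (nat list \<Rightarrow> nat \<Rightarrow> nat) \<Rightarrow> nat \<Rightarrow> nat list \<Rightarrow> nat \<Rightarrow> nat" where
  "perm_family b \<pi> j = (\<lambda>p i. if length p = j \<and> set p \<subseteq> {..<b} \<and> i < b then \<pi> p i else 0)"

end

theory Submission
  imports Defs
begin

definition valb :: "nat \<Rightarrow> nat list \<Rightarrow> nat" where
  "valb b xs = foldl (\<lambda>a d. a * b + d) 0 xs"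

lemma valb_Nil[simp]: "valb b [] = 0" by (simp add: valb_def)
lemma valb_snoc[simp]: "valb b (xs @ [d]) = valb b xs * b + d" by (simp add: valb_def)

definition scr :: "(nat list \<Rightarrow> nat \<Rightarrow> nat) \<Rightarrow> nat list \<Rightarrow> nat list" where
  "scr \<pi> xs = map (\<lambda>j. \<pi> (take j xs) (xs ! j)) [0..<length xs]"

lemma scr_Nil[simp]: "scr \<pi> [] = []" by (simp add: scr_def)
lemma scr_snoc[simp]: "scr \<pi> (xs @ [d]) = scr \<pi> xs @ [\<pi> xs d]"
  by (auto simp add: scr_def nth_append intro!: map_cong)

lemma length_scr[simp]: "length (scr \<pi> xs) = length xs" by (simp add: scr_def)

lemma valb_lt:
  assumes "set xs \<subseteq> {..<b}" shows "valb b xs < b ^ length xs"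
  using assms
proof (induction xs rule: rev_induct)
  case Nil then show ?case by simp
next
  case (snoc x xs)
  then have "valb b xs < b ^ length xs" "x < b" by auto
  then have "valb b xs * b + x < (valb b xs + 1) * b" by simp
  also have "\<dots> \<le> b ^ length xs * b" using \<open>valb b xs < b ^ length xs\<close>
    by (intro mult_right_mono) auto
  finally show ?case by (simp add: mult.commute)
qed

lemma valb_inj:
  assumes "set xs \<subseteq> {..<b}" "set ys \<subseteq> {..<b}" "length xs = length ys" "valb b xs = valb b ys"
  shows "xs = ys"
  using assms
proof (induction xs arbitrary: ys rule: rev_induct)
  case Nil then show ?case by simp
next
  case (snoc x xs)
  obtain ys' e where ys: "ys = ys' @ [e]"
    using snoc.prems(3) by (cases ys rule: rev_exhaust) auto
  have xb: "x < b" "e < b" using snoc.prems(1,2) ys by auto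
  have eq: "valb b xs * b + x = valb b ys' * b + e" using snoc.prems(4) ys by simp
  then have "(valb b xs * b + x) mod b = (valb b ys' * b + e) mod b" by simp
  then have xe: "x = e" using xb by simp
  with eq have "valb b xs * b = valb b ys' * b" by simp
  then have v: "valb b xs = valb b ys'" using xb by simp
  have s1: "set xs \<subseteq> {..<b}" using snoc.prems(1) by simp
  have s2: "set ys' \<subseteq> {..<b}" using snoc.prems(2) ys by simp
  have l: "length xs = length ys'" using snoc.prems(3) ys by simp
  have "xs = ys'" using snoc.IH[OF s1 s2 l v] .
  then show ?case using ys xe by simp
qed

lemma valb_surj:
  assumes "K < b ^ L" "b > 0"
  shows "\<exists>xs. length xs = L \<and> set xs \<subseteq> {..<b} \<and> valb b xs = K"
  using assms(1)
proof (induction L arbitrary: K)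
  case 0 then show ?case by simp
next
  case (Suc L)
  have "K div b < b ^ L" using Suc.prems assms(2)
    by (simp add: div_less_iff_less_mult mult.commute)
  then obtain xs where xs: "length xs = L" "set xs \<subseteq> {..<b}" "valb b xs = K div b"
    using Suc.IH by blast
  show ?case
    by (rule exI[of _ "xs @ [K mod b]"]) (use xs assms(2) in auto)
qed

lemma scr_digits:
  assumes "\<And>p. length p < L \<Longrightarrow> set p \<subseteq> {..<b} \<Longrightarrow> \<pi> p ` {..<b} \<subseteq> {..<b}"
    and "length xs \<le> L" "set xs \<subseteq> {..<b}"
  shows "set (scr \<pi> xs) \<subseteq> {..<b}"
  using assms(2,3)
proof (induction xs rule: rev_induct)
  case Nil then show ?case by simp
next
  case (snoc x xs)
  then show ?case using assms(1)[of xs] by auto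
qed

lemma scr_inj:
  assumes "\<And>p. length p < L \<Longrightarrow> set p \<subseteq> {..<b} \<Longrightarrow> inj_on (\<pi> p) {..<b}"
    and "length xs \<le> L" "set xs \<subseteq> {..<b}" "set ys \<subseteq> {..<b}" "length xs = length ys"
    and "scr \<pi> xs = scr \<pi> ys"
  shows "xs = ys"
  using assms(2-)
proof (induction xs arbitrary: ys rule: rev_induct)
  case Nil then show ?case by simp
next
  case (snoc x xs)
  obtain ys' e where ys: "ys = ys' @ [e]"
    using snoc.prems(4) by (cases ys rule: rev_exhaust) auto
  have eq: "scr \<pi> xs = scr \<pi> ys'" "\<pi> xs x = \<pi> ys' e" using snoc.prems(5) ys by auto
  have "xs = ys'" using snoc ys eq by (intro snoc.IH) auto
  moreover have "x = e"
  proof -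
    have "inj_on (\<pi> xs) {..<b}" using assms(1)[of xs] snoc.prems by simp
    moreover have "x < b" "e < b" using snoc.prems ys by auto
    moreover have "\<pi> xs x = \<pi> xs e" using eq(2) \<open>xs = ys'\<close> by simp
    ultimately show ?thesis by (meson inj_onD lessThan_iff)
  qed
  ultimately show ?case using ys by simp
qed

lemma scr_surj:
  assumes "\<And>p. length p < L \<Longrightarrow> set p \<subseteq> {..<b} \<Longrightarrow> {..<b} \<subseteq> \<pi> p ` {..<b}"
    and "length zs \<le> L" "set zs \<subseteq> {..<b}"
  shows "\<exists>xs. length xs = length zs \<and> set xs \<subseteq> {..<b} \<and> scr \<pi> xs = zs"
  using assms(2-)
proof (induction zs rule: rev_induct)
  case Nil then show ?case by simp
next
  case (snoc z zs)
  then obtain xs where xs: "length xs = length zs" "set xs \<subseteq> {..<b}" "scr \<pi> xs = zs" by auto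
  have "z \<in> \<pi> xs ` {..<b}" using assms(1)[of xs] xs snoc.prems by auto
  then obtain d where "d < b" "\<pi> xs d = z" by auto
  then show ?case using xs by (intro exI[of _ "xs @ [d]"]) auto
qed

lemma digit_prefix_Suc: "digit_prefix b x (Suc L) = digit_prefix b x L @ [digit b x (Suc L)]"
  by (simp add: digit_prefix_def)

lemma digit_prefix_0[simp]: "digit_prefix b x 0 = []"
  by (simp add: digit_prefix_def)

lemma length_digit_prefix[simp]: "length (digit_prefix b x L) = L"
  by (simp add: digit_prefix_def)

lemma digit_lt: "b > 0 \<Longrightarrow> digit b x j < b"
  unfolding digit_def by (simp add: nat_less_iff)

lemma set_digit_prefix: "b > 0 \<Longrightarrow> set (digit_prefix b x L) \<subseteq> {..<b}"
  by (auto simp add: digit_prefix_def digit_lt)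

lemma floor_digits:
  assumes "b > 0" "0 \<le> x" "x < 1"
  shows "\<lfloor>x * real b ^ L\<rfloor> = int (valb b (digit_prefix b x L))"
proof (induction L)
  case 0 then show ?case using assms by (simp add: digit_prefix_def floor_eq_iff)
next
  case (Suc L)
  define F where "F = \<lfloor>x * real b ^ Suc L\<rfloor>"
  have F0: "F \<ge> 0" using assms by (simp add: F_def)
  have "\<lfloor>x * real b ^ L\<rfloor> = \<lfloor>(x * real b ^ Suc L) / real_of_int (int b)\<rfloor>"
    using assms by simp
  also have "\<dots> = F div int b" unfolding F_def by (rule floor_divide_real_eq_div) simp
  finally have Fd: "F div int b = int (valb b (digit_prefix b x L))" using Suc by simp
  have dg: "int (digit b x (Suc L)) = F mod int b"
    using assms by (simp add: digit_def F_def)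
  have "F = F div int b * int b + F mod int b" by simp
  then have "F = int (valb b (digit_prefix b x L)) * int b + int (digit b x (Suc L))"
    using Fd dg by simp
  then show ?case unfolding F_def by (simp add: digit_prefix_Suc)
qed

lemma interval_floor_iff:
  fixes B x :: real
  assumes "B > 0"
  shows "(real K / B \<le> x \<and> x < (real K + 1) / B) \<longleftrightarrow> \<lfloor>x * B\<rfloor> = int K"
proof -
  have "(real K / B \<le> x \<and> x < (real K + 1) / B) \<longleftrightarrow> (real K \<le> x * B \<and> x * B < real K + 1)"
    using assms by (simp add: field_simps)
  also have "\<dots> \<longleftrightarrow> \<lfloor>x * B\<rfloor> = int K" by (simp add: floor_eq_iff)
  finally show ?thesis .
qed

lemma sum_times_pow:
  assumes "b > 0"
  shows "(\<Sum>j=1..l. real (e j) / real b ^ j) * real b ^ l = real (valb b (map e [1..<Suc l]))"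
proof (induction l)
  case 0 then show ?case by simp
next
  case (Suc l)
  have "(\<Sum>j=1..Suc l. real (e j) / real b ^ j) * real b ^ Suc l
     = ((\<Sum>j=1..l. real (e j) / real b ^ j) * real b ^ l) * real b + real (e (Suc l))"
    using assms by (simp add: algebra_simps)
  also have "\<dots> = real (valb b (map e [1..<Suc (Suc l)]))"
    using Suc by simp
  finally show ?case .
qed

lemma floor_scr_sum:
  assumes "b > 0" "\<And>j. j \<in> {1..l} \<Longrightarrow> e j < b" "0 \<le> z" "z < 1" "L \<le> l"
  shows "\<lfloor>((\<Sum>j=1..l. real (e j) / real b ^ j) + z / real b ^ l) * real b ^ L\<rfloor>
           = int (valb b (map e [1..<Suc L]))"
  using assms(2-)
proof (induction l arbitrary: z L)
  case 0 then show ?case by (simp add: floor_eq_iff)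
next
  case (Suc l)
  show ?case
  proof (cases "L = Suc l")
    case True
    have "((\<Sum>j=1..Suc l. real (e j) / real b ^ j) + z / real b ^ Suc l) * real b ^ L
       = (\<Sum>j=1..Suc l. real (e j) / real b ^ j) * real b ^ Suc l + z"
      using True assms(1) by (simp add: algebra_simps)
    also have "\<dots> = real (valb b (map e [1..<Suc L])) + z"
      using sum_times_pow[OF assms(1), of e "Suc l"] True by simp
    finally show ?thesis using Suc.prems by (simp add: floor_eq_iff)
  next
    case False
    then have L: "L \<le> l" using Suc.prems by simp
    define z' where "z' = (real (e (Suc l)) + z) / real b"
    have eb: "e (Suc l) < b" using Suc.prems by simp
    then have "real (e (Suc l)) + 1 \<le> real b" by linarith
    then have z'1: "z' < 1" "0 \<le> z'" using Suc.prems assms(1) by (auto simp add: z'_def field_simps)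
    have "(\<Sum>j=1..Suc l. real (e j) / real b ^ j) + z / real b ^ Suc l
        = (\<Sum>j=1..l. real (e j) / real b ^ j) + z' / real b ^ l" (is "?a = ?b")
      using assms(1) by (simp add: z'_def field_simps)
    have IH: "\<lfloor>?b * real b ^ L\<rfloor> = int (valb b (map e [1..<Suc L]))"
      by (rule Suc.IH) (use Suc.prems z'1 L in auto)
    show ?thesis unfolding \<open>?a = ?b\<close> by (rule IH)
  qed
qed

definition good :: "nat \<Rightarrow> nat \<Rightarrow> (nat list \<Rightarrow> nat \<Rightarrow> nat) \<Rightarrow> bool" where
  "good b l \<pi> \<longleftrightarrow> (\<forall>p. length p < l \<longrightarrow> set p \<subseteq> {..<b} \<longrightarrow> bij_betw (\<pi> p) {..<b} {..<b})"

lemma map_e_scr: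
  assumes "b > 0"
  shows "map (\<lambda>j. \<pi> (digit_prefix b x (j - 1)) (digit b x j)) [1..<Suc L] = scr \<pi> (digit_prefix b x L)"
proof (induction L)
  case 0 then show ?case by simp
next
  case (Suc L)
  have "[1..<Suc (Suc L)] = [1..<Suc L] @ [Suc L]" by simp
  then show ?case using Suc by (simp add: digit_prefix_Suc del: upt_Suc)
qed

lemma good_lt:
  assumes "good b l \<pi>" "length p < l" "set p \<subseteq> {..<b}" "i < b"
  shows "\<pi> p i < b"
  using assms unfolding good_def bij_betw_def by auto

lemma scramble_floor:
  assumes "good b l \<pi>" "b > 0" "0 \<le> x" "x < 1" "0 \<le> z" "z < 1" "L \<le> l"
  shows "\<lfloor>scramble b l \<pi> z x * real b ^ L\<rfloor> = int (valb b (scr \<pi> (digit_prefix b x L)))"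
proof -
  define e where "e j = \<pi> (digit_prefix b x (j - 1)) (digit b x j)" for j
  have eb: "e j < b" if "j \<in> {1..l}" for j
    unfolding e_def using that assms(2)
    by (intro good_lt[OF assms(1)]) (auto simp: set_digit_prefix digit_lt)
  have "\<lfloor>scramble b l \<pi> z x * real b ^ L\<rfloor> = int (valb b (map e [1..<Suc L]))"
    unfolding scramble_def e_def[symmetric]
    by (rule floor_scr_sum) (use assms eb in auto)
  also have "map e [1..<Suc L] = scr \<pi> (digit_prefix b x L)"
    unfolding e_def by (rule map_e_scr[OF assms(2)])
  finally show ?thesis .
qed

lemma scramble_eq:
  assumes "b > 0"
  shows "scramble b l \<pi> z x = (real (valb b (scr \<pi> (digit_prefix b x l))) + z) / real b ^ l"
proof -
  define e where "e j = \<pi> (digit_prefix b x (j - 1)) (digit b x j)" for j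
  have "(\<Sum>j=1..l. real (e j) / real b ^ j) * real b ^ l = real (valb b (map e [1..<Suc l]))"
    by (rule sum_times_pow[OF assms])
  also have "map e [1..<Suc l] = scr \<pi> (digit_prefix b x l)"
    unfolding e_def by (rule map_e_scr[OF assms])
  finally have "(\<Sum>j=1..l. real (e j) / real b ^ j) = real (valb b (scr \<pi> (digit_prefix b x l))) / real b ^ l"
    using assms by (simp add: field_simps)
  then show ?thesis unfolding scramble_def e_def[symmetric] by (simp add: add_divide_distrib)
qed

lemma scramble_unit:
  assumes "good b l \<pi>" "b > 0" "0 \<le> x" "x < 1" "0 \<le> z" "z < 1"
  shows "0 \<le> scramble b l \<pi> z x \<and> scramble b l \<pi> z x < 1"
  using scramble_floor[OF assms, of 0] by (simp add: floor_eq_iff)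

lemma good_inj: "good b l \<pi> \<Longrightarrow> length p < l \<Longrightarrow> set p \<subseteq> {..<b} \<Longrightarrow> inj_on (\<pi> p) {..<b}"
  unfolding good_def bij_betw_def by auto

lemma good_surj: "good b l \<pi> \<Longrightarrow> length p < l \<Longrightarrow> set p \<subseteq> {..<b} \<Longrightarrow> {..<b} \<subseteq> \<pi> p ` {..<b}"
  unfolding good_def bij_betw_def by auto

lemma good_img: "good b l \<pi> \<Longrightarrow> length p < l \<Longrightarrow> set p \<subseteq> {..<b} \<Longrightarrow> \<pi> p ` {..<b} \<subseteq> {..<b}"
  unfolding good_def bij_betw_def by auto

lemma scr_preimage_ex:
  assumes "good b l \<pi>" "b > 0" "L \<le> l" "K < b ^ L"
  shows "\<exists>q. length q = L \<and> set q \<subseteq> {..<b} \<and> valb b (scr \<pi> q) = K"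
proof -
  obtain zs where zs: "length zs = L" "set zs \<subseteq> {..<b}" "valb b zs = K"
    using valb_surj[OF assms(4,2)] by blast
  obtain q where "length q = length zs" "set q \<subseteq> {..<b}" "scr \<pi> q = zs"
    using scr_surj[of l b \<pi> zs] good_surj[OF assms(1)] zs assms(3) by auto
  then show ?thesis using zs by auto
qed

lemma scr_valb_inj:
  assumes "good b l \<pi>" "length q = L" "length q' = L" "L \<le> l"
    "set q \<subseteq> {..<b}" "set q' \<subseteq> {..<b}" "valb b (scr \<pi> q) = valb b (scr \<pi> q')"
  shows "q = q'"
proof -
  have "set (scr \<pi> q) \<subseteq> {..<b}" "set (scr \<pi> q') \<subseteq> {..<b}"
    using scr_digits[of l b \<pi>] good_img[OF assms(1)] assms by auto
  then have "scr \<pi> q = scr \<pi> q'"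
    using valb_inj assms by auto
  then show ?thesis
    using scr_inj[of l b \<pi> q q'] good_inj[OF assms(1)] assms by auto
qed

lemma scramble_interval_iff:
  assumes "good b l \<pi>" "b > 0" "0 \<le> x" "x < 1" "0 \<le> z" "z < 1" "L \<le> l"
    "length q = L" "set q \<subseteq> {..<b}"
  shows "(real (valb b (scr \<pi> q)) / real b ^ L \<le> scramble b l \<pi> z x
            \<and> scramble b l \<pi> z x < (real (valb b (scr \<pi> q)) + 1) / real b ^ L)
     \<longleftrightarrow> (real (valb b q) / real b ^ L \<le> x \<and> x < (real (valb b q) + 1) / real b ^ L)"
proof -
  have pos: "real b ^ L > 0" using assms(2) by simp
  have "(real (valb b (scr \<pi> q)) / real b ^ L \<le> scramble b l \<pi> z x
            \<and> scramble b l \<pi> z x < (real (valb b (scr \<pi> q)) + 1) / real b ^ L)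
     \<longleftrightarrow> valb b (scr \<pi> (digit_prefix b x L)) = valb b (scr \<pi> q)"
    using interval_floor_iff[OF pos] scramble_floor[OF assms(1-7)] by simp
  also have "\<dots> \<longleftrightarrow> digit_prefix b x L = q"
    using scr_valb_inj[OF assms(1), of "digit_prefix b x L" L q] assms set_digit_prefix[OF assms(2)]
    by auto
  also have "\<dots> \<longleftrightarrow> valb b (digit_prefix b x L) = valb b q"
    using valb_inj[of "digit_prefix b x L" b q] assms set_digit_prefix[OF assms(2)] by auto
  also have "\<dots> \<longleftrightarrow> (real (valb b q) / real b ^ L \<le> x \<and> x < (real (valb b q) + 1) / real b ^ L)"
    using interval_floor_iff[OF pos] floor_digits[OF assms(2,3,4)] by simp
  finally show ?thesis .
qed

lemma net_preserved:
  fixes P :: "nat \<Rightarrow> real ^ 'd" and pis :: "'d \<Rightarrow> nat list \<Rightarrow> nat \<Rightarrow> nat"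
    and z :: "'d \<Rightarrow> nat \<Rightarrow> real"
  assumes b: "b > 0" and net: "is_net b t m P" and g: "\<And>k. good b (m - t) (pis k)"
    and z: "\<And>k i. i < b ^ m \<Longrightarrow> 0 \<le> z k i \<and> z k i < 1"
  shows "is_net b t m (\<lambda>i. \<chi> k. scramble b (m - t) (pis k) (z k i) (P i $ k))"
proof -
  let ?Y = "\<lambda>i. \<chi> k. scramble b (m - t) (pis k) (z k i) (P i $ k)"
  have P01: "0 \<le> P i $ k \<and> P i $ k < 1" if "i < b ^ m" for i k
    using net that unfolding is_net_def unit_cube_def by auto
  have "?Y i \<in> unit_cube" if "i < b ^ m" for i
    unfolding unit_cube_def using scramble_unit[OF g b] P01[OF that] z[OF that] by simp
  moreover have "card {i\<in>{..<b ^ m}. ?Y i \<in> E} = b ^ t" if E: "elementary_interval b (m - t) E" for E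
  proof -
    obtain Ls Ks where LK: "\<forall>i. Ks i < b ^ Ls i" "(\<Sum>i\<in>UNIV. Ls i) = m - t" "E = elem_box b Ls Ks"
      using E unfolding elementary_interval_def by blast
    have Lle: "Ls k \<le> m - t" for k
      using member_le_sum[of k UNIV Ls] LK(2) by simp
    have "\<forall>k. \<exists>q. length q = Ls k \<and> set q \<subseteq> {..<b} \<and> valb b (scr (pis k) q) = Ks k"
      using scr_preimage_ex[OF g b Lle] LK(1) by blast
    then obtain q where q: "\<And>k. length (q k) = Ls k" "\<And>k. set (q k) \<subseteq> {..<b}"
      "\<And>k. valb b (scr (pis k) (q k)) = Ks k"
      by metis
    define Ks' where "Ks' k = valb b (q k)" for k
    have "Ks' k < b ^ Ls k" for k
      unfolding Ks'_def using valb_lt[OF q(2)[of k]] q(1)[of k] by simp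
    then have E': "elementary_interval b (m - t) (elem_box b Ls Ks')"
      unfolding elementary_interval_def using LK(2) by blast
    have "?Y i \<in> E \<longleftrightarrow> P i \<in> elem_box b Ls Ks'" if "i < b ^ m" for i
    proof -
      have "?Y i \<in> E \<longleftrightarrow> (\<forall>k. real (valb b (scr (pis k) (q k))) / real b ^ Ls k \<le> ?Y i $ k
             \<and> ?Y i $ k < (real (valb b (scr (pis k) (q k))) + 1) / real b ^ Ls k)"
        unfolding LK(3) elem_box_def q(3) by simp
      also have "\<dots> \<longleftrightarrow> (\<forall>k. real (valb b (q k)) / real b ^ Ls k \<le> P i $ k
             \<and> P i $ k < (real (valb b (q k)) + 1) / real b ^ Ls k)"
        using scramble_interval_iff[OF g b _ _ _ _ Lle q(1) q(2)] P01[OF that] z[OF that] by simp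
      also have "\<dots> \<longleftrightarrow> P i \<in> elem_box b Ls Ks'"
        unfolding elem_box_def Ks'_def by simp
      finally show ?thesis .
    qed
    then have "{i\<in>{..<b ^ m}. ?Y i \<in> E} = {i\<in>{..<b ^ m}. P i \<in> elem_box b Ls Ks'}"
      by auto
    then show ?thesis using net E' unfolding is_net_def by simp
  qed
  ultimately show ?thesis unfolding is_net_def by blast
qed

lemma borel_measurable_vec_lambda:
  fixes f :: "'d::finite \<Rightarrow> 'a \<Rightarrow> real"
  assumes "\<And>k. f k \<in> borel_measurable M"
  shows "(\<lambda>\<omega>. \<chi> k. f k \<omega>) \<in> borel_measurable M"
proof (rule borel_measurable_euclidean_space[THEN iffD2], rule ballI)
  fix i :: "real^'d" assume "i \<in> Basis"
  then obtain k where i: "i = axis k 1" unfolding Basis_vec_def by auto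
  have "(\<lambda>x. (\<chi> k. f k x) \<bullet> i) = f k" unfolding i inner_axis by (simp add: fun_eq_iff)
  then show "(\<lambda>x. (\<chi> k. f k x) \<bullet> i) \<in> borel_measurable M" using assms by simp
qed

lemma hbox_sets[measurable]:
  "{x::real^'d. \<forall>k. lo k \<le> x $ k \<and> x $ k < hi k} \<in> sets borel"
proof -
  have "{x::real^'d. \<forall>k. lo k \<le> x $ k \<and> x $ k < hi k} = (\<Inter>k. (\<lambda>x. x $ k) -` {lo k..<hi k})"
    by auto
  also have "\<dots> \<in> sets borel"
    by (intro sets.countable_INT' countable_finite) (auto intro!: measurable_sets_borel[OF borel_measurable_nth])
  finally show ?thesis .
qed

lemma lt_sets[measurable]:
  "{x::real^'d. \<forall>k. x $ k < a k} \<in> sets borel"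
proof -
  have "{x::real^'d. \<forall>k. x $ k < a k} = (\<Inter>k. (\<lambda>x. x $ k) -` {..<a k})"
    by auto
  also have "\<dots> \<in> sets borel"
    by (intro sets.countable_INT' countable_finite) (auto intro!: measurable_sets_borel[OF borel_measurable_nth])
  finally show ?thesis .
qed

lemma emeasure_hbox:
  fixes lo hi :: "'d::finite \<Rightarrow> real"
  assumes le: "\<And>k. lo k \<le> hi k"
  shows "emeasure lborel {x::real^'d. \<forall>k. lo k \<le> x $ k \<and> x $ k < hi k} = ennreal (\<Prod>k\<in>UNIV. hi k - lo k)"
proof -
  define a :: "real^'d" where "a = (\<chi> k. lo k)"
  define c :: "real^'d" where "c = (\<chi> k. hi k)"
  let ?S = "{x::real^'d. \<forall>k. lo k \<le> x $ k \<and> x $ k < hi k}"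
  have sub1: "box a c \<subseteq> ?S" unfolding a_def c_def interval_cart by (force intro: less_imp_le)
  have sub2: "?S \<subseteq> cbox a c" unfolding a_def c_def interval_cart by (force intro: less_imp_le)
  have ne: "cbox a c \<noteq> {}" using le by (auto simp: a_def c_def interval_cart intro!: exI[of _ a])
  have "emeasure lborel (cbox a c) = ennreal (measure lborel (cbox a c))"
    by (rule emeasure_eq_ennreal_measure) (use emeasure_lborel_cbox_finite[of a c] in simp)
  also have "measure lborel (cbox a c) = (\<Prod>k\<in>UNIV. hi k - lo k)"
    unfolding content_cbox_cart[OF ne] by (simp add: a_def c_def)
  finally have cb: "emeasure lborel (cbox a c) = ennreal (\<Prod>k\<in>UNIV. hi k - lo k)" .
  have bx: "emeasure lborel (box a c) = emeasure lborel (cbox a c)"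
    by (simp only: emeasure_lborel_box_eq emeasure_lborel_cbox_eq)
  have "emeasure lborel (box a c) \<le> emeasure lborel ?S"
    by (rule emeasure_mono[OF sub1]) simp
  moreover have "emeasure lborel ?S \<le> emeasure lborel (cbox a c)"
    by (rule emeasure_mono[OF sub2]) simp
  ultimately have "emeasure lborel ?S = emeasure lborel (cbox a c)"
    unfolding bx by (rule antisym[rotated])
  then show ?thesis using cb by simp
qed

lemma measure_Ico_lt:
  "measure lborel ({0..<1} \<inter> {..<u::real}) = max 0 (min 1 u)"
proof -
  have "{0..<1} \<inter> {..<u::real} = {0..<min 1 u}" by auto
  then show ?thesis by (cases "0 \<le> min 1 u") auto
qed

lemma factor_eq:
  fixes a c \<delta> :: real
  assumes "\<delta> > 0"
  shows "(max c (min a (c + \<delta>)) - c) / \<delta> = max 0 (min 1 ((a - c) / \<delta>))"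
proof -
  have "max c (min a (c + \<delta>)) - c = max 0 (min (a - c) \<delta>)" by (simp add: max_def min_def)
  also have "\<dots> / \<delta> = max 0 (min ((a - c) / \<delta>) 1)"
    using assms by (cases "a - c \<le> \<delta>"; cases "0 \<le> a - c") (auto simp: max_def min_def field_simps)
  finally show ?thesis by (simp add: min.commute)
qed

lemma (in prob_space) distr_uniform_box:
  fixes X :: "'d::finite \<Rightarrow> 'a \<Rightarrow> real" and c :: "'d \<Rightarrow> real" and \<delta> :: real
  assumes \<delta>: "\<delta> > 0"
    and meas: "\<And>k. X k \<in> borel_measurable M"
    and unif: "\<And>k. distr M lborel (X k) = uniform_measure lborel {0..<1}"
    and ind: "\<And>B. (\<And>k. B k \<in> sets borel) \<Longrightarrow>
       prob (\<Inter>k. X k -` B k \<inter> space M) = (\<Prod>k\<in>UNIV. prob (X k -` B k \<inter> space M))"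
  shows "distr M borel (\<lambda>\<omega>. \<chi> k. c k + \<delta> * X k \<omega>)
           = uniform_measure lborel {x::real^'d. \<forall>k. c k \<le> x $ k \<and> x $ k < c k + \<delta>}"
proof -
  let ?W = "\<lambda>\<omega>. \<chi> k. c k + \<delta> * X k \<omega>"
  let ?Box = "{x::real^'d. \<forall>k. c k \<le> x $ k \<and> x $ k < c k + \<delta>}"
  let ?S = "\<lambda>a::'d\<Rightarrow>real. {x::real^'d. \<forall>k. x $ k < a k}"
  let ?E = "range ?S"
  have Wm: "?W \<in> borel_measurable M" using meas by (intro borel_measurable_vec_lambda) auto
  have Boxm: "emeasure lborel ?Box = ennreal (\<Prod>k\<in>(UNIV::'d set). \<delta>)"
    using emeasure_hbox[of c "\<lambda>k. c k + \<delta>"] \<delta> by simp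
  have sigE: "sets borel = sigma_sets UNIV ?E"
  proof -
    have eq: "{x::real^'d. eucl_less x a} = ?S (\<lambda>k. a $ k)" for a
      by (auto simp: eucl_less_def Basis_vec_def inner_axis)
    have "range (\<lambda>a::real^'d. {x. eucl_less x a}) = ?E"
    proof
      show "range (\<lambda>a::real^'d. {x. eucl_less x a}) \<subseteq> ?E" using eq by auto
      show "?E \<subseteq> range (\<lambda>a::real^'d. {x. eucl_less x a})"
      proof
        fix Y assume "Y \<in> ?E"
        then obtain a where "Y = ?S a" by auto
        then have "Y = {x. eucl_less x (\<chi> k. a k)}" using eq[of "\<chi> k. a k"] by simp
        then show "Y \<in> range (\<lambda>a::real^'d. {x. eucl_less x a})" by auto
      qed
    qed
    then have "borel = sigma UNIV ?E" using borel_eq_lessThan[where 'a="real^'d"] by simp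
    then have "sets borel = sets (sigma UNIV ?E)" by simp
    also have "\<dots> = sigma_sets UNIV ?E" by (rule sets_measure_of) simp
    finally show ?thesis .
  qed
  show ?thesis
  proof (rule measure_eqI_generator_eq_countable[where E="?E" and \<Omega>=UNIV
        and A="range (\<lambda>n::nat. ?S (\<lambda>_. real n))"])
    show "Int_stable ?E"
    proof (rule Int_stableI)
      fix A B assume "A \<in> ?E" "B \<in> ?E"
      then obtain a a' where "A = ?S a" "B = ?S a'" by auto
      then have "A \<inter> B = ?S (\<lambda>k. min (a k) (a' k))" by auto
      then show "A \<inter> B \<in> ?E" by (intro image_eqI[OF _ UNIV_I])
    qed
    show "?E \<subseteq> Pow UNIV" by simp
    show "sets (distr M borel ?W) = sigma_sets UNIV ?E" using sigE by simp
    show "sets (uniform_measure lborel ?Box) = sigma_sets UNIV ?E" using sigE by simp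
    show "range (\<lambda>n::nat. ?S (\<lambda>_. real n)) \<subseteq> ?E" by auto
    show "countable (range (\<lambda>n::nat. ?S (\<lambda>_. real n)))" by simp
    show "\<Union> (range (\<lambda>n::nat. ?S (\<lambda>_. real n))) = UNIV"
    proof safe
      fix x :: "real^'d"
      obtain n :: nat where n: "(\<Sum>k\<in>UNIV. \<bar>x $ k\<bar>) < real n" using reals_Archimedean2 by blast
      have "x $ k < real n" for k
        using member_le_sum[of k UNIV "\<lambda>k. \<bar>x $ k\<bar>"] n by simp
      then show "x \<in> \<Union> (range (\<lambda>n::nat. ?S (\<lambda>_. real n)))" by blast
    qed simp
    show "emeasure (distr M borel ?W) A \<noteq> \<infinity>" if "A \<in> range (\<lambda>n::nat. ?S (\<lambda>_. real n))" for A
    proof -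
      have "A \<in> sets borel" using that by auto
      then show ?thesis using Wm by (simp add: emeasure_distr emeasure_finite)
    qed
    fix Y assume "Y \<in> ?E"
    then obtain a where Y: "Y = ?S a" by auto
    define u where "u k = (a k - c k) / \<delta>" for k
    have Ym: "Y \<in> sets borel" using Y by simp
    have pre: "?W -` Y \<inter> space M = (\<Inter>k. X k -` {..<u k} \<inter> space M)"
      using \<delta> by (auto simp: Y u_def field_simps)
    have pk: "prob (X k -` {..<v} \<inter> space M) = max 0 (min 1 v)" for k v
    proof -
      have "prob (X k -` {..<v} \<inter> space M) = measure (distr M lborel (X k)) {..<v}"
        using meas by (subst measure_distr) auto
      also have "\<dots> = measure lborel ({0..<1} \<inter> {..<v}) / measure lborel {0..<(1::real)}"
        unfolding unif by (subst measure_uniform_measure) auto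
      also have "\<dots> = max 0 (min 1 v)" using measure_Ico_lt[of v] by simp
      finally show ?thesis .
    qed
    have "emeasure (distr M borel ?W) Y = emeasure M (?W -` Y \<inter> space M)"
      using Wm Ym by (simp add: emeasure_distr)
    also have "\<dots> = ennreal (prob (\<Inter>k. X k -` {..<u k} \<inter> space M))"
      unfolding pre by (simp add: emeasure_eq_measure)
    also have "\<dots> = ennreal (\<Prod>k\<in>UNIV. max 0 (min 1 (u k)))"
      using ind[of "\<lambda>k. {..<u k}"] pk by simp
    finally have L: "emeasure (distr M borel ?W) Y = ennreal (\<Prod>k\<in>UNIV. max 0 (min 1 (u k)))" .
    define hi where "hi k = max (c k) (min (a k) (c k + \<delta>))" for k
    have BY: "?Box \<inter> Y = {x::real^'d. \<forall>k. c k \<le> x $ k \<and> x $ k < hi k}"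
    proof -
      have pt: "(c k \<le> v \<and> v < c k + \<delta> \<and> v < a k) \<longleftrightarrow> (c k \<le> v \<and> v < hi k)" for k v
        unfolding hi_def by (cases "a k \<le> c k + \<delta>") (auto simp: max_def min_def)
      show ?thesis unfolding Y using pt by blast
    qed
    have "emeasure (uniform_measure lborel ?Box) Y = emeasure lborel (?Box \<inter> Y) / emeasure lborel ?Box"
      using Ym by (subst emeasure_uniform_measure) auto
    also have "\<dots> = ennreal (\<Prod>k\<in>UNIV. hi k - c k) / ennreal (\<Prod>k\<in>(UNIV::'d set). \<delta>)"
      unfolding BY Boxm by (subst emeasure_hbox) (auto simp: hi_def)
    also have "\<dots> = ennreal ((\<Prod>k\<in>UNIV. hi k - c k) / (\<Prod>k\<in>(UNIV::'d set). \<delta>))"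
      using \<delta> by (intro divide_ennreal prod_nonneg prod_pos) (auto simp: hi_def)
    also have "(\<Prod>k\<in>UNIV. hi k - c k) / (\<Prod>k\<in>(UNIV::'d set). \<delta>) = (\<Prod>k\<in>UNIV. (hi k - c k) / \<delta>)"
      by (simp add: prod_dividef)
    also have "\<dots> = (\<Prod>k\<in>UNIV. max 0 (min 1 (u k)))"
      unfolding hi_def u_def using factor_eq[OF \<delta>] by simp
    finally show "emeasure (distr M borel ?W) Y = emeasure (uniform_measure lborel ?Box) Y"
      using L by simp
  qed
qed

lemma perm_family_eval:
  "length p = j \<Longrightarrow> set p \<subseteq> {..<b} \<Longrightarrow> c < b \<Longrightarrow> perm_family b \<pi> j p c = \<pi> p c"
  by (simp add: perm_family_def)

lemma scr_nth: "j < length xs \<Longrightarrow> scr \<pi> xs ! j = \<pi> (take j xs) (xs ! j)"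
  by (simp add: scr_def)

lemma cube_iff:
  assumes "good b l \<pi>" "b > 0" "0 \<le> x" "x < 1" "0 \<le> z" "z < 1" "length q = l" "set q \<subseteq> {..<b}"
  shows "(real (valb b q) / real b ^ l \<le> scramble b l \<pi> z x
            \<and> scramble b l \<pi> z x < (real (valb b q) + 1) / real b ^ l)
     \<longleftrightarrow> (\<forall>j<l. \<pi> (take j (digit_prefix b x l)) (digit_prefix b x l ! j) = q ! j)"
proof -
  have pos: "real b ^ l > 0" using assms(2) by simp
  let ?D = "digit_prefix b x l"
  have sd: "set (scr \<pi> ?D) \<subseteq> {..<b}"
    using scr_digits[of l b \<pi> ?D] good_img[OF assms(1)] set_digit_prefix[OF assms(2)] by auto
  have "(real (valb b q) / real b ^ l \<le> scramble b l \<pi> z x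
            \<and> scramble b l \<pi> z x < (real (valb b q) + 1) / real b ^ l)
     \<longleftrightarrow> valb b (scr \<pi> ?D) = valb b q"
    using interval_floor_iff[OF pos] scramble_floor[OF assms(1-6) order_refl] by simp
  also have "\<dots> \<longleftrightarrow> scr \<pi> ?D = q"
    using valb_inj[of "scr \<pi> ?D" b q] sd assms(7,8) by auto
  also have "\<dots> \<longleftrightarrow> (\<forall>j<l. \<pi> (take j ?D) (?D ! j) = q ! j)"
    using assms(7) by (auto simp: list_eq_iff_nth_eq scr_nth)
  finally show ?thesis .
qed

lemma sigma_sets_Int_INT:
  assumes "finite S" "Gen \<subseteq> Pow \<Omega>" "\<And>s. s \<in> S \<Longrightarrow> A s \<in> sigma_sets \<Omega> Gen"
  shows "\<Omega> \<inter> (\<Inter>s\<in>S. A s) \<in> sigma_sets \<Omega> Gen"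
proof -
  interpret sigma_algebra \<Omega> "sigma_sets \<Omega> Gen" by (rule sigma_algebra_sigma_sets[OF assms(2)])
  show ?thesis using assms(1,3)
  proof (induction S rule: finite_induct)
    case empty then show ?case by simp
  next
    case (insert s S)
    have "\<Omega> \<inter> (\<Inter>s\<in>insert s S. A s) = (\<Omega> \<inter> (\<Inter>s\<in>S. A s)) \<inter> A s" by auto
    then show ?case using insert by auto
  qed
qed

locale scr_setting =
  fixes M :: "'a measure"
    and b t m :: nat
    and P :: "nat \<Rightarrow> real ^ 'd"
    and \<pi> :: "'d \<Rightarrow> 'a \<Rightarrow> nat list \<Rightarrow> nat \<Rightarrow> nat"
    and y :: "'d \<Rightarrow> nat \<Rightarrow> 'a \<Rightarrow> real"
  assumes PS: "prob_space M"
    and b2: "b \<ge> 2" and tm: "t \<le> m"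
    and net: "is_net b t m P"
    and bij: "\<And>k \<omega> p. \<omega> \<in> space M \<Longrightarrow> length p < m - t \<Longrightarrow> set p \<subseteq> {..<b} \<Longrightarrow>
           bij_betw (\<pi> k \<omega> p) {..<b} {..<b}"
    and pmeas: "\<And>k j. j < m - t \<Longrightarrow>
           (\<lambda>\<omega>. perm_family b (\<pi> k \<omega>) j) \<in> measurable M (count_space UNIV)"
    and sf: "\<And>k p i j. length p < m - t \<Longrightarrow> set p \<subseteq> {..<b} \<Longrightarrow> i < b \<Longrightarrow> j < b \<Longrightarrow>
           measure M {\<omega>\<in>space M. \<pi> k \<omega> p i = j} = 1 / real b"
    and y01: "\<And>k n \<omega>. n < b ^ m \<Longrightarrow> \<omega> \<in> space M \<Longrightarrow> y k n \<omega> \<in> {0..<1}"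
    and ymeas: "\<And>k n. n < b ^ m \<Longrightarrow> y k n \<in> borel_measurable M"
    and ydist: "\<And>k n. n < b ^ m \<Longrightarrow> distr M lborel (y k n) = uniform_measure lborel {0..<1}"
    and indep: "prob_space.indep_sets M
           (\<lambda>x. case x of
                   Inl (k, j) \<Rightarrow> {(\<lambda>\<omega>. perm_family b (\<pi> k \<omega>) j) -` A \<inter> space M | A. True}
                 | Inr (k, n) \<Rightarrow> {y k n -` B \<inter> space M | B. B \<in> sets borel})
           (Inl ` (UNIV \<times> {..<m - t}) \<union> Inr ` (UNIV \<times> {..<b ^ m}))"
begin

sublocale prob_space M by (rule PS)

abbreviation "l \<equiv> m - t"

definition Fam where
  "Fam = (\<lambda>x. case x of
                   Inl (k, j) \<Rightarrow> {(\<lambda>\<omega>. perm_family b (\<pi> k \<omega>) j) -` A \<inter> space M | A. True}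
                 | Inr (k, n) \<Rightarrow> {y k n -` B \<inter> space M | B. B \<in> sets borel})"

definition IS where
  "IS = Inl ` (UNIV \<times> {..<m - t}) \<union> Inr ` (UNIV \<times> {..<b ^ m})"

lemma indep': "indep_sets Fam IS"
  using indep unfolding Fam_def IS_def .

definition Y where
  "Y i \<omega> = (\<chi> k. scramble b (m - t) (\<pi> k \<omega>) (y k i \<omega>) (P i $ k))"

lemma bpos: "b > 0" using b2 by simp

lemma good: "\<omega> \<in> space M \<Longrightarrow> good b l (\<pi> k \<omega>)"
  unfolding good_def using bij by blast

lemma P01: "i < b ^ m \<Longrightarrow> 0 \<le> P i $ k \<and> P i $ k < 1"
  using net unfolding is_net_def unit_cube_def by auto

lemma pi_meas:
  assumes "length p < l" "set p \<subseteq> {..<b}" "c < b"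
  shows "(\<lambda>\<omega>. real (\<pi> k \<omega> p c)) \<in> borel_measurable M"
proof -
  have "(\<lambda>\<omega>. real (\<pi> k \<omega> p c)) = (\<lambda>f. real (f p c)) \<circ> (\<lambda>\<omega>. perm_family b (\<pi> k \<omega>) (length p))"
    using assms by (simp add: fun_eq_iff perm_family_eval)
  also have "\<dots> \<in> borel_measurable M"
    by (rule measurable_comp[OF pmeas[OF assms(1)]]) simp
  finally show ?thesis .
qed

lemma Y_meas: "i < b ^ m \<Longrightarrow> Y i \<in> borel_measurable M"
  unfolding Y_def
proof (rule borel_measurable_vec_lambda)
  fix k assume i: "i < b ^ m"
  let ?x = "P i $ k"
  have "(\<lambda>\<omega>. \<Sum>j=1..l. real (\<pi> k \<omega> (digit_prefix b ?x (j - 1)) (digit b ?x j)) / real b ^ j)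
          \<in> borel_measurable M"
  proof (rule borel_measurable_sum)
    fix j assume "j \<in> {1..l}"
    then have "length (digit_prefix b ?x (j - 1)) < l" by (simp, arith)
    then show "(\<lambda>\<omega>. real (\<pi> k \<omega> (digit_prefix b ?x (j - 1)) (digit b ?x j)) / real b ^ j) \<in> borel_measurable M"
      using pi_meas set_digit_prefix[OF bpos] digit_lt[OF bpos] by (intro borel_measurable_divide) auto
  qed
  moreover have "(\<lambda>\<omega>. y k i \<omega> / real b ^ l) \<in> borel_measurable M"
    using ymeas[OF i] by simp
  ultimately show "(\<lambda>\<omega>. scramble b l (\<pi> k \<omega>) (y k i \<omega>) ?x) \<in> borel_measurable M"
    unfolding scramble_def by (rule borel_measurable_add)
qed

lemma Y_unit: "i < b ^ m \<Longrightarrow> \<omega> \<in> space M \<Longrightarrow> Y i \<omega> \<in> unit_cube"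
  unfolding Y_def unit_cube_def using scramble_unit[OF good bpos] P01 y01 by simp

lemma Y_net: "AE \<omega> in M. is_net b t m (\<lambda>i. Y i \<omega>)"
proof (rule AE_I2)
  fix \<omega> assume \<omega>: "\<omega> \<in> space M"
  show "is_net b t m (\<lambda>i. Y i \<omega>)"
    unfolding Y_def
    by (rule net_preserved[OF bpos net good[OF \<omega>]]) (use y01 \<omega> in auto)
qed

end

context scr_setting
begin

definition D where "D i k = digit_prefix b (P i $ k) l"

lemma D_props: "length (D i k) = l" "set (D i k) \<subseteq> {..<b}"
  unfolding D_def using set_digit_prefix[OF bpos] by auto

lemma Y_cube_iff:
  assumes i: "i < b ^ m" and \<omega>: "\<omega> \<in> space M"
    and Q: "\<And>k. length (Q k) = l" "\<And>k. set (Q k) \<subseteq> {..<b}"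
  shows "Y i \<omega> \<in> elem_box b (\<lambda>_. l) (\<lambda>k. valb b (Q k))
     \<longleftrightarrow> (\<forall>k. \<forall>j<l. \<pi> k \<omega> (take j (D i k)) (D i k ! j) = Q k ! j)"
  unfolding elem_box_def Y_def D_def
  using cube_iff[OF good[OF \<omega>] bpos _ _ _ _ Q(1) Q(2)] P01[OF i] y01[OF i \<omega>] by simp

lemma basic_cube_Q:
  assumes "basic_cube b t m C"
  obtains Q where "\<And>k. length (Q k) = l" "\<And>k. set (Q k) \<subseteq> {..<b}"
    "C = elem_box b (\<lambda>_. l) (\<lambda>k. valb b (Q k))"
proof -
  obtain K where K: "\<forall>i. K i < b ^ l" "C = elem_box b (\<lambda>_. l) K"
    using assms unfolding basic_cube_def by blast
  have "\<forall>k. \<exists>q. length q = l \<and> set q \<subseteq> {..<b} \<and> valb b q = K k"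
    using valb_surj[OF _ bpos] K(1) by blast
  then obtain Q where Q: "\<And>k. length (Q k) = l" "\<And>k. set (Q k) \<subseteq> {..<b}" "\<And>k. valb b (Q k) = K k"
    by metis
  have "(\<lambda>k. valb b (Q k)) = K" using Q(3) by auto
  then show ?thesis using that Q K(2) by metis
qed

lemma Fam_Inl:
  assumes "\<And>\<omega>. \<omega> \<in> space M \<Longrightarrow> \<Phi> \<omega> = \<Psi> (perm_family b (\<pi> k \<omega>) d)"
  shows "{\<omega>\<in>space M. \<Phi> \<omega>} \<in> Fam (Inl (k, d))"
proof -
  have "{\<omega>\<in>space M. \<Phi> \<omega>} = (\<lambda>\<omega>. perm_family b (\<pi> k \<omega>) d) -` {f. \<Psi> f} \<inter> space M"
    using assms by auto
  then show ?thesis unfolding Fam_def by (simp, intro exI[of _ "{f. \<Psi> f}"]) auto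
qed

lemma perm_event_Fam:
  assumes "j < l" "length Dl = l" "set Dl \<subseteq> {..<b}"
  shows "{\<omega>\<in>space M. \<pi> k \<omega> (take j Dl) (Dl ! j) = v} \<in> Fam (Inl (k, j))"
proof (rule Fam_Inl)
  fix \<omega>
  have "Dl ! j \<in> set Dl" using assms by simp
  then have "Dl ! j < b" using assms(3) by (meson lessThan_iff subsetD)
  then have "perm_family b (\<pi> k \<omega>) j (take j Dl) (Dl ! j) = \<pi> k \<omega> (take j Dl) (Dl ! j)"
    using assms by (intro perm_family_eval) (auto dest: in_set_takeD)
  then show "(\<pi> k \<omega> (take j Dl) (Dl ! j) = v) = (\<lambda>f. f (take j Dl) (Dl ! j) = v) (perm_family b (\<pi> k \<omega>) j)"
    by simp
qed

lemma perm_event_prob: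
  assumes "j < l" "length Dl = l" "set Dl \<subseteq> {..<b}" "v < b"
  shows "prob {\<omega>\<in>space M. \<pi> k \<omega> (take j Dl) (Dl ! j) = v} = 1 / real b"
proof -
  have "Dl ! j \<in> set Dl" using assms by simp
  then have "Dl ! j < b" using assms(3) by (meson lessThan_iff subsetD)
  then show ?thesis using assms by (intro sf) (auto dest: in_set_takeD)
qed

lemma cube_prob:
  assumes i: "i < b ^ m" and C: "basic_cube b t m C"
  shows "measure M {\<omega>\<in>space M. Y i \<omega> \<in> C} = 1 / real b ^ (CARD('d) * l)"
proof -
  obtain Q where Q: "\<And>k. length (Q k) = l" "\<And>k. set (Q k) \<subseteq> {..<b}"
    "C = elem_box b (\<lambda>_. l) (\<lambda>k. valb b (Q k))"
    using basic_cube_Q[OF C] by blast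
  define E where "E kj = {\<omega>\<in>space M. \<pi> (fst kj) \<omega> (take (snd kj) (D i (fst kj))) (D i (fst kj) ! (snd kj)) = Q (fst kj) ! (snd kj)}" for kj
  let ?S = "UNIV \<times> {..<l} :: ('d \<times> nat) set"
  have ev: "{\<omega>\<in>space M. Y i \<omega> \<in> C} = space M \<inter> (\<Inter>kj\<in>?S. E kj)"
    unfolding Q(3) using Y_cube_iff[OF i _ Q(1,2)] by (auto simp: E_def)
  show ?thesis
  proof (cases "l = 0")
    case True
    then show ?thesis unfolding ev by (simp add: prob_space)
  next
    case False
    define AA where "AA x = (case x of Inl kj \<Rightarrow> E kj | Inr _ \<Rightarrow> {})" for x :: "('d \<times> nat) + ('d \<times> nat)"
    obtain s where s: "s \<in> ?S" using False by (intro that[of "(undefined, 0)"]) simp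
    have "(\<Inter>kj\<in>?S. E kj) \<subseteq> E s" using s by blast
    also have "E s \<subseteq> space M" by (auto simp: E_def)
    finally have "space M \<inter> (\<Inter>kj\<in>?S. E kj) = (\<Inter>kj\<in>?S. E kj)" by blast
    also have "\<dots> = (\<Inter>x\<in>Inl ` ?S. AA x)" by (simp add: AA_def)
    also have "prob \<dots> = (\<Prod>x\<in>Inl ` ?S. prob (AA x))"
    proof (rule indep_setsD[OF indep'])
      show "Inl ` ?S \<subseteq> IS" unfolding IS_def by auto
      show "Inl ` ?S \<noteq> {}" using s by blast
      show "finite (Inl ` ?S)" by simp
      show "\<forall>x\<in>Inl ` ?S. AA x \<in> Fam x"
        using perm_event_Fam[OF _ D_props] by (auto simp: AA_def E_def)
    qed
    also have "\<dots> = (\<Prod>kj\<in>?S. prob (E kj))"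
      by (subst prod.reindex) (auto simp: AA_def)
    also have "\<dots> = (\<Prod>kj\<in>?S. 1 / real b)"
    proof (rule prod.cong[OF refl])
      fix kj assume kj: "kj \<in> ?S"
      obtain k j where kj': "kj = (k, j)" by (cases kj)
      have jl: "j < l" using kj kj' by simp
      have "Q k ! j \<in> set (Q k)" using Q(1) jl by simp
      then have "Q k ! j < b" using Q(2) by (meson lessThan_iff subsetD)
      then show "prob (E kj) = 1 / real b"
        unfolding E_def kj' using perm_event_prob[OF jl D_props] by simp
    qed
    also have "\<dots> = 1 / real b ^ (CARD('d) * l)"
      by (simp add: card_cartesian_product power_one_over)
    finally show ?thesis using ev by simp
  qed
qed

end

context scr_setting
begin

lemma Fam_sub: "Fam i \<subseteq> Pow (space M)"
  unfolding Fam_def by (cases i) auto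

lemma Fam_Int_stable: "Int_stable (Fam i)"
proof (cases i)
  case (Inl kj)
  obtain k j where kj: "kj = (k, j)" by (cases kj)
  show ?thesis unfolding Fam_def Inl kj Int_stable_def
  proof (clarsimp)
    fix A B
    show "\<exists>C. (\<lambda>\<omega>. perm_family b (\<pi> k \<omega>) j) -` A \<inter> space M \<inter> ((\<lambda>\<omega>. perm_family b (\<pi> k \<omega>) j) -` B \<inter> space M)
             = (\<lambda>\<omega>. perm_family b (\<pi> k \<omega>) j) -` C \<inter> space M"
      by (intro exI[of _ "A \<inter> B"]) auto
  qed
next
  case (Inr kn)
  obtain k n where kn: "kn = (k, n)" by (cases kn)
  show ?thesis unfolding Fam_def Inr kn Int_stable_def
  proof (clarsimp)
    fix A B :: "real set" assume "A \<in> sets borel" "B \<in> sets borel"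
    then show "\<exists>C. y k n -` A \<inter> space M \<inter> (y k n -` B \<inter> space M) = y k n -` C \<inter> space M \<and> C \<in> sets borel"
      by (intro exI[of _ "A \<inter> B"]) auto
  qed
qed

lemma y_indep:
  assumes j: "j < b ^ m" and B: "\<And>k. B k \<in> sets borel"
  shows "prob (\<Inter>k. y k j -` B k \<inter> space M) = (\<Prod>k\<in>UNIV. prob (y k j -` B k \<inter> space M))"
proof -
  define AA where "AA x = (case x of Inr (k, n) \<Rightarrow> y k n -` B k \<inter> space M | Inl _ \<Rightarrow> {})"
    for x :: "('d \<times> nat) + ('d \<times> nat)"
  have inj: "inj (\<lambda>k::'d. Inr (k, j) :: ('d \<times> nat) + ('d \<times> nat))" by (auto intro: injI)
  have "prob (\<Inter>x\<in>(\<lambda>k. Inr (k, j)) ` UNIV. AA x) = (\<Prod>x\<in>(\<lambda>k. Inr (k, j)) ` UNIV. prob (AA x))"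
  proof (rule indep_setsD[OF indep'])
    show "(\<lambda>k. Inr (k, j)) ` UNIV \<subseteq> IS" using j unfolding IS_def by auto
    show "(\<lambda>k. Inr (k, j)) ` UNIV \<noteq> {}" by simp
    show "finite ((\<lambda>k. Inr (k, j)) ` (UNIV :: 'd set))" by simp
    show "\<forall>x\<in>(\<lambda>k. Inr (k, j)) ` UNIV. AA x \<in> Fam x"
      using B unfolding AA_def Fam_def by auto
  qed
  moreover have "(\<Inter>x\<in>(\<lambda>k. Inr (k, j)) ` UNIV. AA x) = (\<Inter>k. y k j -` B k \<inter> space M)"
    by (simp add: AA_def)
  moreover have "(\<Prod>x\<in>(\<lambda>k. Inr (k, j)) ` UNIV. prob (AA x)) = (\<Prod>k\<in>UNIV. prob (y k j -` B k \<inter> space M))"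
    by (subst prod.reindex[OF inj]) (simp add: AA_def)
  ultimately show ?thesis by simp
qed

end

context scr_setting
begin

lemma Y_C_val:
  assumes j: "j < b ^ m" and \<omega>: "\<omega> \<in> space M" and YC: "Y j \<omega> \<in> elem_box b (\<lambda>_. l) K"
  shows "valb b (scr (\<pi> k \<omega>) (D j k)) = K k"
proof -
  have pos: "real b ^ l > 0" using bpos by simp
  have "real (K k) / real b ^ l \<le> Y j \<omega> $ k \<and> Y j \<omega> $ k < (real (K k) + 1) / real b ^ l"
    using YC unfolding elem_box_def by auto
  then have "\<lfloor>Y j \<omega> $ k * real b ^ l\<rfloor> = int (K k)" using interval_floor_iff[OF pos] by simp
  moreover have "\<lfloor>Y j \<omega> $ k * real b ^ l\<rfloor> = int (valb b (scr (\<pi> k \<omega>) (D j k)))"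
    unfolding Y_def D_def using scramble_floor[OF good[OF \<omega>] bpos _ _ _ _ order_refl] P01[OF j] y01[OF j \<omega>]
    by simp
  ultimately show ?thesis by simp
qed

lemma cond_prob:
  assumes A: "A \<in> sets lborel" and J: "J \<noteq> {}" "J \<subseteq> {..<b ^ m}"
    and C: "\<forall>j\<in>J. basic_cube b t m (C j)"
    and pos: "measure M {\<omega>\<in>space M. \<forall>j\<in>J. Y j \<omega> \<in> C j} > 0"
  shows "measure M {\<omega>\<in>space M. \<forall>j\<in>J. Y j \<omega> \<in> A \<inter> C j}
          / measure M {\<omega>\<in>space M. \<forall>j\<in>J. Y j \<omega> \<in> C j}
        = (\<Prod>j\<in>J. measure lborel (A \<inter> C j) / measure lborel (C j))"
proof -
  have finJ: "finite J" using J(2) finite_subset by blast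
  have "\<forall>j\<in>J. \<exists>Qj. (\<forall>k. length (Qj k) = l) \<and> (\<forall>k. set (Qj k) \<subseteq> {..<b})
      \<and> C j = elem_box b (\<lambda>_. l) (\<lambda>k. valb b (Qj k))"
  proof
    fix j assume "j \<in> J"
    then obtain Qj where "\<And>k. length (Qj k) = l" "\<And>k. set (Qj k) \<subseteq> {..<b}"
      "C j = elem_box b (\<lambda>_. l) (\<lambda>k. valb b (Qj k))"
      using basic_cube_Q C by blast
    then show "\<exists>Qj. (\<forall>k. length (Qj k) = l) \<and> (\<forall>k. set (Qj k) \<subseteq> {..<b})
      \<and> C j = elem_box b (\<lambda>_. l) (\<lambda>k. valb b (Qj k))" by blast
  qed
  then obtain Q where Q: "\<And>j k. j \<in> J \<Longrightarrow> length (Q j k) = l" "\<And>j k. j \<in> J \<Longrightarrow> set (Q j k) \<subseteq> {..<b}"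
    "\<And>j. j \<in> J \<Longrightarrow> C j = elem_box b (\<lambda>_. l) (\<lambda>k. valb b (Q j k))"
    by metis
  define K where "K j k = valb b (Q j k)" for j k
  define G where "G = {\<omega>\<in>space M. \<forall>j\<in>J. Y j \<omega> \<in> C j}"
  define \<delta> where "\<delta> = 1 / real b ^ l"
  have \<delta>: "\<delta> > 0" using bpos by (simp add: \<delta>_def)
  define w where "w j \<omega> = (\<chi> k. real (K j k) / real b ^ l + \<delta> * y k j \<omega>)" for j \<omega>
  define H where "H j = w j -` A \<inter> space M" for j
  have Am: "A \<in> sets borel" using A by simp

  have YC_w: "Y j \<omega> = w j \<omega>" if jJ: "j \<in> J" and \<omega>: "\<omega> \<in> space M" and YC: "Y j \<omega> \<in> C j" for j \<omega>
  proof -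
    have j: "j < b ^ m" using jJ J(2) by auto
    have YC': "Y j \<omega> \<in> elem_box b (\<lambda>_. l) (K j)" using YC Q(3)[OF jJ] by (simp add: K_def[abs_def])
    show ?thesis
    proof (subst vec_eq_iff, rule allI)
      fix k
      have "Y j \<omega> $ k = (real (valb b (scr (\<pi> k \<omega>) (D j k))) + y k j \<omega>) / real b ^ l"
        unfolding Y_def D_def using scramble_eq[OF bpos] by simp
      also have "\<dots> = (real (K j k) + y k j \<omega>) / real b ^ l"
        using Y_C_val[OF j \<omega> YC'] by simp
      also have "\<dots> = w j \<omega> $ k" unfolding w_def \<delta>_def by (simp add: add_divide_distrib)
      finally show "Y j \<omega> $ k = w j \<omega> $ k" .
    qed
  qed
  have ev: "{\<omega>\<in>space M. \<forall>j\<in>J. Y j \<omega> \<in> A \<inter> C j} = G \<inter> (\<Inter>j\<in>J. H j)"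
  proof (intro equalityI subsetI)
    fix \<omega> assume "\<omega> \<in> {\<omega>\<in>space M. \<forall>j\<in>J. Y j \<omega> \<in> A \<inter> C j}"
    then show "\<omega> \<in> G \<inter> (\<Inter>j\<in>J. H j)" using YC_w by (auto simp: G_def H_def)
  next
    fix \<omega> assume \<omega>: "\<omega> \<in> G \<inter> (\<Inter>j\<in>J. H j)"
    have "Y j \<omega> \<in> A \<inter> C j" if jJ: "j \<in> J" for j
    proof -
      have "\<omega> \<in> space M" "Y j \<omega> \<in> C j" using \<omega> jJ by (auto simp: G_def)
      moreover have "\<omega> \<in> H j" using \<omega> jJ by blast
      then have "w j \<omega> \<in> A" by (simp add: H_def)
      ultimately show ?thesis using YC_w[OF jJ] by simp
    qed
    then show "\<omega> \<in> {\<omega>\<in>space M. \<forall>j\<in>J. Y j \<omega> \<in> A \<inter> C j}" using \<omega> by (auto simp: G_def)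
  qed

  define Ig where "Ig g = (case g of None \<Rightarrow> Inl ` ((UNIV :: 'd set) \<times> {..<l})
                                | Some n \<Rightarrow> Inr ` ((UNIV :: 'd set) \<times> {n}))" for g :: "nat option"
  define Jg where "Jg = insert None (Some ` {..<b ^ m})"
  have U: "(\<Union>g\<in>Jg. Ig g) = IS"
  proof (intro equalityI subsetI)
    fix x :: "('d \<times> nat) + ('d \<times> nat)" assume "x \<in> (\<Union>g\<in>Jg. Ig g)"
    then show "x \<in> IS" unfolding Jg_def Ig_def IS_def by auto
  next
    fix x :: "('d \<times> nat) + ('d \<times> nat)" assume x: "x \<in> IS"
    show "x \<in> (\<Union>g\<in>Jg. Ig g)"
    proof (cases x)
      case (Inl kj)
      then show ?thesis using x unfolding Jg_def Ig_def IS_def by auto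
    next
      case (Inr kn)
      obtain k n where kn: "kn = (k, n)" by (cases kn)
      then have "n < b ^ m" using x Inr unfolding IS_def by auto
      then have "Some n \<in> Jg" "x \<in> Ig (Some n)" unfolding Jg_def Ig_def using Inr kn by auto
      then show ?thesis by blast
    qed
  qed
  have ind2: "indep_sets (\<lambda>g. sigma_sets (space M) (\<Union>i\<in>Ig g. Fam i)) Jg"
  proof (rule indep_sets_collect_sigma)
    show "indep_sets Fam (\<Union>g\<in>Jg. Ig g)" unfolding U by (rule indep')
    show "Int_stable (Fam i)" for i by (rule Fam_Int_stable)
    show "disjoint_family_on Ig Jg"
      unfolding disjoint_family_on_def Ig_def by (auto split: option.splits)
  qed
  have gen_sub: "(\<Union>i\<in>Ig g. Fam i) \<subseteq> Pow (space M)" for g using Fam_sub by blast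

  define GG where "GG kd = {\<omega>\<in>space M. \<forall>j\<in>J. \<pi> (fst kd) \<omega> (take (snd kd) (D j (fst kd))) (D j (fst kd) ! (snd kd))
                                   = Q j (fst kd) ! (snd kd)}" for kd :: "'d \<times> nat"
  have G_eq: "G = space M \<inter> (\<Inter>kd\<in>(UNIV :: 'd set) \<times> {..<l}. GG kd)"
  proof -
    have "Y j \<omega> \<in> C j \<longleftrightarrow> (\<forall>k. \<forall>d<l. \<pi> k \<omega> (take d (D j k)) (D j k ! d) = Q j k ! d)"
      if "j \<in> J" "\<omega> \<in> space M" for j \<omega>
      using Y_cube_iff[of j \<omega> "Q j"] Q[OF that(1)] that J(2) by auto
    then show ?thesis unfolding G_def GG_def by auto
  qed
  have GG_Fam: "GG kd \<in> Fam (Inl kd)" if "kd \<in> (UNIV :: 'd set) \<times> {..<l}" for kd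
  proof -
    obtain k d where kd: "kd = (k, d)" by (cases kd)
    have dl: "d < l" using that kd by simp
    show ?thesis unfolding GG_def kd fst_conv snd_conv
    proof (rule Fam_Inl[where \<Psi> = "\<lambda>f. \<forall>j\<in>J. f (take d (D j k)) (D j k ! d) = Q j k ! d"])
      fix \<omega>
      have "perm_family b (\<pi> k \<omega>) d (take d (D j k)) (D j k ! d) = \<pi> k \<omega> (take d (D j k)) (D j k ! d)" for j
      proof (rule perm_family_eval)
        show "length (take d (D j k)) = d" using dl D_props by simp
        show "set (take d (D j k)) \<subseteq> {..<b}" using D_props(2) by (meson in_set_takeD subset_iff)
        have "D j k ! d \<in> set (D j k)" using dl D_props(1) by simp
        then show "D j k ! d < b" using D_props(2) by (meson lessThan_iff subsetD)
      qed
      then show "(\<forall>j\<in>J. \<pi> k \<omega> (take d (D j k)) (D j k ! d) = Q j k ! d)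
          = (\<lambda>f. \<forall>j\<in>J. f (take d (D j k)) (D j k ! d) = Q j k ! d) (perm_family b (\<pi> k \<omega>) d)"
        by simp
    qed
  qed
  have Gs: "G \<in> sigma_sets (space M) (\<Union>i\<in>Ig None. Fam i)"
    unfolding G_eq
  proof (rule sigma_sets_Int_INT[OF _ gen_sub])
    show "finite ((UNIV :: 'd set) \<times> {..<l})" by simp
    fix kd assume "kd \<in> (UNIV :: 'd set) \<times> {..<l}"
    then show "GG kd \<in> sigma_sets (space M) (\<Union>i\<in>Ig None. Fam i)"
      using GG_Fam unfolding Ig_def by (intro sigma_sets.Basic) auto
  qed
  have wmeasM: "w j \<in> borel_measurable M" if "j < b ^ m" for j
    unfolding w_def using ymeas[OF that] by (intro borel_measurable_vec_lambda) simp
  have Hs: "H j \<in> sigma_sets (space M) (\<Union>i\<in>Ig (Some j). Fam i)" if j: "j < b ^ m" for j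
  proof -
    let ?N = "sigma (space M) (\<Union>i\<in>Ig (Some j). Fam i)"
    have spN: "space ?N = space M" by (rule space_measure_of[OF gen_sub])
    have stN: "sets ?N = sigma_sets (space M) (\<Union>i\<in>Ig (Some j). Fam i)" by (rule sets_measure_of[OF gen_sub])
    have ymN: "y k j \<in> borel_measurable ?N" for k
    proof (rule measurableI)
      fix B :: "real set" assume "B \<in> sets borel"
      then have "y k j -` B \<inter> space M \<in> Fam (Inr (k, j))" unfolding Fam_def by auto
      then show "y k j -` B \<inter> space ?N \<in> sets ?N"
        unfolding spN stN by (intro sigma_sets.Basic) (auto simp: Ig_def)
    qed simp
    have "w j \<in> borel_measurable ?N"
      unfolding w_def using ymN by (intro borel_measurable_vec_lambda) simp
    then have "w j -` A \<inter> space ?N \<in> sets ?N" using Am by (rule measurable_sets)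
    then show ?thesis unfolding H_def spN stN .
  qed

  define AA where "AA g = (case g of None \<Rightarrow> G | Some j \<Rightarrow> H j)" for g
  have "prob (\<Inter>g\<in>insert None (Some ` J). AA g) = (\<Prod>g\<in>insert None (Some ` J). prob (AA g))"
  proof (rule indep_setsD[OF ind2])
    show "insert None (Some ` J) \<subseteq> Jg" using J(2) unfolding Jg_def by auto
    show "insert None (Some ` J) \<noteq> {}" by simp
    show "finite (insert None (Some ` J))" using finJ by simp
    show "\<forall>g\<in>insert None (Some ` J). AA g \<in> sigma_sets (space M) (\<Union>i\<in>Ig g. Fam i)"
      using Gs Hs J(2) unfolding AA_def by auto
  qed
  moreover have "(\<Inter>g\<in>insert None (Some ` J). AA g) = G \<inter> (\<Inter>j\<in>J. H j)"
    by (simp add: AA_def)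
  moreover have "(\<Prod>g\<in>insert None (Some ` J). prob (AA g)) = prob G * (\<Prod>j\<in>J. prob (H j))"
    using finJ by (simp add: AA_def prod.reindex)
  ultimately have main: "prob (G \<inter> (\<Inter>j\<in>J. H j)) = prob G * (\<Prod>j\<in>J. prob (H j))" by simp

  have PH: "prob (H j) = measure lborel (A \<inter> C j) / measure lborel (C j)" if jJ: "j \<in> J" for j
  proof -
    have j: "j < b ^ m" using jJ J(2) by auto
    have box: "{x::real^'d. \<forall>k. real (K j k) / real b ^ l \<le> x $ k \<and> x $ k < real (K j k) / real b ^ l + \<delta>} = C j"
      unfolding Q(3)[OF jJ] elem_box_def K_def \<delta>_def by (simp add: add_divide_distrib)
    have dist: "distr M borel (w j) = uniform_measure lborel (C j)"
      unfolding w_def box[symmetric]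
    proof (rule distr_uniform_box[OF \<delta>])
      show "\<And>k. y k j \<in> borel_measurable M" using ymeas[OF j] .
      show "\<And>k. distr M lborel (y k j) = uniform_measure lborel {0..<1}" using ydist[OF j] .
      show "\<And>B. (\<And>k. B k \<in> sets borel) \<Longrightarrow>
          prob (\<Inter>k. y k j -` B k \<inter> space M) = (\<Prod>k\<in>UNIV. prob (y k j -` B k \<inter> space M))"
        using y_indep[OF j] by blast
    qed
    have Cm: "emeasure lborel (C j) = ennreal (\<Prod>k\<in>(UNIV::'d set). \<delta>)"
      using emeasure_hbox[of "\<lambda>k. real (K j k) / real b ^ l" "\<lambda>k. real (K j k) / real b ^ l + \<delta>"] \<delta> box
      by simp
    have "prob (H j) = measure (distr M borel (w j)) A"
      unfolding H_def using wmeasM[OF j] Am by (simp add: measure_distr)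
    also have "\<dots> = measure lborel (C j \<inter> A) / measure lborel (C j)"
      unfolding dist using Cm \<delta> A by (subst measure_uniform_measure) (auto simp: prod_pos)
    finally show ?thesis by (simp add: Int_commute)
  qed
  have "measure M {\<omega>\<in>space M. \<forall>j\<in>J. Y j \<omega> \<in> A \<inter> C j} / measure M G
      = prob G * (\<Prod>j\<in>J. prob (H j)) / prob G"
    unfolding ev main ..
  also have "\<dots> = (\<Prod>j\<in>J. prob (H j))" using pos unfolding G_def by simp
  also have "\<dots> = (\<Prod>j\<in>J. measure lborel (A \<inter> C j) / measure lborel (C j))"
    using PH by (rule prod.cong[OF refl])
  finally show ?thesis unfolding G_def .
qed

end

theorem proposition3p6:
  fixes M :: "'a measure"
    and b t m :: nat
    and P :: "nat \<Rightarrow> real ^ 'd"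
    and \<pi> :: "'d \<Rightarrow> 'a \<Rightarrow> nat list \<Rightarrow> nat \<Rightarrow> nat"
    and y :: "'d \<Rightarrow> nat \<Rightarrow> 'a \<Rightarrow> real"
  assumes "prob_space M"
    and "CARD('d) \<ge> 2" and "b \<ge> 2" and "t \<le> m"
    and "is_net b t m P"
    \<comment> \<open>each pi k omega p is a permutation of {0..b-1}\<close>
    and "\<And>k \<omega> p. \<omega> \<in> space M \<Longrightarrow> length p < m - t \<Longrightarrow> set p \<subseteq> {..<b} \<Longrightarrow>
           bij_betw (\<pi> k \<omega> p) {..<b} {..<b}"
    \<comment> \<open>the permutation families (per coordinate and digit) are random variables\<close>
    and "\<And>k j. j < m - t \<Longrightarrow>
           (\<lambda>\<omega>. perm_family b (\<pi> k \<omega>) j) \<in> measurable M (count_space UNIV)"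
    \<comment> \<open>single-fold uniformity\<close>
    and "\<And>k p i j. length p < m - t \<Longrightarrow> set p \<subseteq> {..<b} \<Longrightarrow> i < b \<Longrightarrow> j < b \<Longrightarrow>
           measure M {\<omega>\<in>space M. \<pi> k \<omega> p i = j} = 1 / real b"
    \<comment> \<open>the values y are uniform on [0,1)\<close>
    and "\<And>k n \<omega>. n < b ^ m \<Longrightarrow> \<omega> \<in> space M \<Longrightarrow> y k n \<omega> \<in> {0..<1}"
    and "\<And>k n. n < b ^ m \<Longrightarrow> y k n \<in> borel_measurable M"
    and "\<And>k n. n < b ^ m \<Longrightarrow> distr M lborel (y k n) = uniform_measure lborel {0..<1}"
    \<comment> \<open>mutual independence: different coordinates, different digits, and the y values\<close>
    and "prob_space.indep_sets M
           (\<lambda>x. case x of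
                   Inl (k, j) \<Rightarrow> {(\<lambda>\<omega>. perm_family b (\<pi> k \<omega>) j) -` A \<inter> space M | A. True}
                 | Inr (k, n) \<Rightarrow> {y k n -` B \<inter> space M | B. B \<in> sets borel})
           (Inl ` (UNIV \<times> {..<m - t}) \<union> Inr ` (UNIV \<times> {..<b ^ m}))"
  shows "abstract_scrambled_net M b t m
           (\<lambda>i \<omega>. \<chi> k. scramble b (m - t) (\<pi> k \<omega>) (y k i \<omega>) (P i $ k))"
  proof -
  interpret S: scr_setting M b t m P \<pi> y
    by (rule scr_setting.intro) (fact assms)+
  have Yeq: "(\<lambda>i \<omega>. \<chi> k. scramble b (m - t) (\<pi> k \<omega>) (y k i \<omega>) (P i $ k)) = S.Y"
    by (simp add: S.Y_def fun_eq_iff)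
  show ?thesis
    unfolding Yeq abstract_scrambled_net_def
  proof (intro conjI)
    show "\<forall>i<b ^ m. S.Y i \<in> borel_measurable M \<and> (\<forall>\<omega>\<in>space M. S.Y i \<omega> \<in> unit_cube)"
      using S.Y_meas S.Y_unit by blast
    show "AE \<omega> in M. is_net b t m (\<lambda>i. S.Y i \<omega>)" by (rule S.Y_net)
    show "\<forall>i<b ^ m. \<forall>C. basic_cube b t m C \<longrightarrow>
        measure M {\<omega>\<in>space M. S.Y i \<omega> \<in> C} = 1 / real b ^ (CARD('d) * (m - t))"
      using S.cube_prob by blast
    show "\<forall>A\<in>sets lborel. \<forall>J C. J \<noteq> {} \<longrightarrow> J \<subseteq> {..<b ^ m} \<longrightarrow>
        (\<forall>j\<in>J. basic_cube b t m (C j)) \<longrightarrow>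
        measure M {\<omega>\<in>space M. \<forall>j\<in>J. S.Y j \<omega> \<in> C j} > 0 \<longrightarrow>
        measure M {\<omega>\<in>space M. \<forall>j\<in>J. S.Y j \<omega> \<in> A \<inter> C j}
          / measure M {\<omega>\<in>space M. \<forall>j\<in>J. S.Y j \<omega> \<in> C j}
        = (\<Prod>j\<in>J. measure lborel (A \<inter> C j) / measure lborel (C j))"
      using S.cond_prob by blast
  qed
qed

end
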